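(* Let $n\geq 3$, $k\in\mathbb{Z}_n$ with $k\neq 0$ and $2k\not\equiv 0\pmod n$, and let $b\in\{1,2,3\}$. Let $C$ be a $(1,b)$-regular set of $\mathrm{GP}(n,k)$. Then $$|E(C)\cap E(U)|=|E(C)\cap E(V)|\quad\text{and}\quad 2|E(C)\cap E(U)|+|E(C)\cap E(U,V)|=\frac{bn}{2+b}.$$
   Context: For an integer $n\geq 3$ and a nonzero $k\in\mathbb{Z}_n$, the generalized Petersen graph $\mathrm{GP}(n,k)$ is the simple graph with vertex set $\{u_i,v_i\mid i\in\mathbb{Z}_n\}$ and edges $u_iu_{i+1}$, $u_iv_i$, $v_iv_{i+k}$ for all $i\in\mathbb{Z}_n$ (indices modulo $n$); with $2k\not\equiv0\pmod n$ it is 3-regular. Let $U=\{u_i\mid i\in\mathbb{Z}_n\}$ and $V=\{v_i\mid i\in\mathbb{Z}_n\}$. For subsets $A,B$ of vertices, $E(A,B)$ denotes the set of edges with one end in $A$ and the other in $B$, and $E(A)=E(A,A)$ is the set of edges with both ends in $A$. For nonnegative integers $a,b$, a set $C$ of vertices of a graph $\Gamma$ is an $(a,b)$-regular set if the subgraph induced by $C$ is $a$-regular and every vertex of $V(\Gamma)\setminus C$ is adjacent to exactly $b$ vertices of $C$. *)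

theory Defs
  imports Complex_Main
begin

text \<open>Vertices of GP(n,k): outer vertices u_i and inner vertices v_i, indices i in {0..<n}
  representing Z_n.\<close>
datatype gpv = U nat | V nat

definition gp_verts :: "nat \<Rightarrow> gpv set" where
  "gp_verts n = U ` {0..<n} \<union> V ` {0..<n}"

definition outer :: "nat \<Rightarrow> gpv set" where
  "outer n = U ` {0..<n}"

definition inner :: "nat \<Rightarrow> gpv set" where
  "inner n = V ` {0..<n}"

definition gp_edges :: "nat \<Rightarrow> nat \<Rightarrow> gpv set set" where
  "gp_edges n k =
     (\<lambda>i. {U i, U ((i + 1) mod n)}) ` {0..<n}
   \<union> (\<lambda>i. {U i, V i}) ` {0..<n}
   \<union> (\<lambda>i. {V i, V ((i + k) mod n)}) ` {0..<n}"

definition gp_adj :: "nat \<Rightarrow> nat \<Rightarrow> gpv \<Rightarrow> gpv \<Rightarrow> bool" where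
  "gp_adj n k x y \<longleftrightarrow> {x, y} \<in> gp_edges n k \<and> x \<noteq> y"

definition edges_between :: "nat \<Rightarrow> nat \<Rightarrow> gpv set \<Rightarrow> gpv set \<Rightarrow> gpv set set" where
  "edges_between n k A B =
     {e \<in> gp_edges n k. \<exists>x y. e = {x, y} \<and> x \<in> A \<and> y \<in> B}"

definition edges_in :: "nat \<Rightarrow> nat \<Rightarrow> gpv set \<Rightarrow> gpv set set" where
  "edges_in n k A = edges_between n k A A"

definition regular_set :: "nat \<Rightarrow> nat \<Rightarrow> nat \<Rightarrow> nat \<Rightarrow> gpv set \<Rightarrow> bool" where
  "regular_set n k a b C \<longleftrightarrow> C \<subseteq> gp_verts n \<and>
     (\<forall>x\<in>C. card {y \<in> C. gp_adj n k x y} = a) \<and>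
     (\<forall>x\<in>gp_verts n - C. card {y \<in> C. gp_adj n k x y} = b)"

end

theory Submission imports Defs "HOL-Number_Theory.Cong" begin

lemma shift_bij:
  assumes "0 < (n::nat)"
  shows "bij_betw (\<lambda>i. (i + c) mod n) {0..<n} {0..<n}"
proof -
  have inj: "inj_on (\<lambda>i. (i + c) mod n) {0..<n}"
  proof (rule inj_onI)
    fix i j assume "i \<in> {0..<n}" "j \<in> {0..<n}" "(i + c) mod n = (j + c) mod n"
    then have "[i + c = j + c] (mod n)" by (simp add: cong_def)
    then have "[i = j] (mod n)" by (simp add: cong_add_rcancel_nat)
    then show "i = j" using \<open>i \<in> {0..<n}\<close> \<open>j \<in> {0..<n}\<close> by (simp add: cong_def)
  qed
  have "(\<lambda>i. (i + c) mod n) ` {0..<n} \<subseteq> {0..<n}" using assms by auto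
  then show ?thesis using inj by (simp add: bij_betw_def endo_inj_surj)
qed

lemma shift_sum:
  assumes "0 < (n::nat)"
  shows "(\<Sum>i\<in>{0..<n}. (h ((i + c) mod n) :: int)) = (\<Sum>i\<in>{0..<n}. h i)"
  using sum.reindex_bij_betw[OF shift_bij[OF assms, of c], of h] by simp

lemma shift_inv:
  assumes "0 < (n::nat)" "c \<le> n" "j < n"
  shows "((j + c) mod n + (n - c)) mod n = j"
proof -
  have "((j + c) mod n + (n - c)) mod n = (j + c + (n - c)) mod n" by (simp add: mod_add_left_eq)
  also have "j + c + (n - c) = j + n" using assms by simp
  finally show ?thesis using assms by simp
qed

lemma gp_edges_pair: "e \<in> gp_edges n k \<Longrightarrow> \<exists>x y. e = {x, y}"
  unfolding gp_edges_def by auto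

lemma pair_sub: "(\<exists>x y. {a, b} = {x, y} \<and> x \<in> A \<and> y \<in> A) \<longleftrightarrow> {a, b} \<subseteq> A"
proof
  assume "\<exists>x y. {a, b} = {x, y} \<and> x \<in> A \<and> y \<in> A"
  then obtain x y where "{a, b} = {x, y}" "x \<in> A" "y \<in> A" by blast
  then show "{a, b} \<subseteq> A" by simp
next
  assume "{a, b} \<subseteq> A"
  then show "\<exists>x y. {a, b} = {x, y} \<and> x \<in> A \<and> y \<in> A" by blast
qed

lemma edges_in_alt: "edges_in n k A = {e \<in> gp_edges n k. e \<subseteq> A}"
  unfolding edges_in_def edges_between_def
proof (rule Collect_cong)
  fix e
  show "(e \<in> gp_edges n k \<and> (\<exists>x y. e = {x, y} \<and> x \<in> A \<and> y \<in> A)) = (e \<in> gp_edges n k \<and> e \<subseteq> A)"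
  proof (cases "e \<in> gp_edges n k")
    case True
    then obtain a b where "e = {a, b}" using gp_edges_pair by blast
    then show ?thesis using pair_sub[of a b A] True by simp
  qed simp
qed

lemma gp_edges_iff: "e \<in> gp_edges n k \<longleftrightarrow> (\<exists>i<n. e = {U i, U ((i + 1) mod n)} \<or> e = {U i, V i} \<or> e = {V i, V ((i + k) mod n)})"
  unfolding gp_edges_def by auto

lemma card3:
  assumes "a \<noteq> b" "a \<noteq> c" "b \<noteq> c"
  shows "card ({a, b, c} \<inter> C) = of_bool (a \<in> C) + of_bool (b \<in> C) + of_bool (c \<in> C)"
  using assms by (cases "a \<in> C"; cases "b \<in> C"; cases "c \<in> C"; auto simp: Int_insert_left)


lemma mod2: "a < 2 * (n::nat) \<Longrightarrow> a mod n = (if a < n then a else a - n)"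
  by (simp add: le_mod_geq)

lemma adjU:
  assumes "n \<ge> 3" "i < n"
  shows "gp_adj n k (U i) y \<longleftrightarrow> y \<in> {U ((i+1) mod n), U ((i+(n-1)) mod n), V i}"
proof
  assume "gp_adj n k (U i) y"
  then have e: "{U i, y} \<in> gp_edges n k" and ne: "U i \<noteq> y" by (auto simp: gp_adj_def)
  from e obtain j where j: "j < n" and
    c: "{U i, y} = {U j, U ((j + 1) mod n)} \<or> {U i, y} = {U j, V j} \<or> {U i, y} = {V j, V ((j + k) mod n)}"
    by (auto simp: gp_edges_iff)
  from c show "y \<in> {U ((i+1) mod n), U ((i+(n-1)) mod n), V i}"
  proof (elim disjE)
    assume h: "{U i, y} = {U j, U ((j + 1) mod n)}"
    then have "(i = j \<and> y = U ((j + 1) mod n)) \<or> (i = (j + 1) mod n \<and> y = U j)"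
      by (auto simp: doubleton_eq_iff)
    then show ?thesis
    proof
      assume "i = (j + 1) mod n \<and> y = U j"
      moreover have "((j + 1) mod n + (n - 1)) mod n = j" using shift_inv[of n 1 j] assms j by simp
      ultimately show ?thesis by simp
    qed auto
  qed (auto simp: doubleton_eq_iff)
next
  assume y: "y \<in> {U ((i+1) mod n), U ((i+(n-1)) mod n), V i}"
  have i1: "(i+1) mod n \<noteq> i" "(i+(n-1)) mod n \<noteq> i" using assms by (auto simp: mod2)
  have inv: "((i + (n-1)) mod n + 1) mod n = i" using shift_inv[of n "n-1" i] assms by simp
  have "(i + (n-1)) mod n < n" using assms by simp
  then have "{U ((i + (n-1)) mod n), U (((i + (n-1)) mod n + 1) mod n)} \<in> gp_edges n k"
    unfolding gp_edges_iff by blast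
  then have "{U i, U ((i + (n-1)) mod n)} \<in> gp_edges n k" using inv by (simp add: insert_commute)
  moreover have "{U i, U ((i+1) mod n)} \<in> gp_edges n k" "{U i, V i} \<in> gp_edges n k"
    unfolding gp_edges_iff using assms by blast+
  ultimately show "gp_adj n k (U i) y" using y i1 by (auto simp: gp_adj_def)
qed

lemma adjV:
  assumes "n \<ge> 3" "i < n" "0 < k" "k < n"
  shows "gp_adj n k (V i) y \<longleftrightarrow> y \<in> {V ((i+k) mod n), V ((i+(n-k)) mod n), U i}"
proof
  assume "gp_adj n k (V i) y"
  then have e: "{V i, y} \<in> gp_edges n k" and ne: "V i \<noteq> y" by (auto simp: gp_adj_def)
  from e obtain j where j: "j < n" and
    c: "{V i, y} = {U j, U ((j + 1) mod n)} \<or> {V i, y} = {U j, V j} \<or> {V i, y} = {V j, V ((j + k) mod n)}"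
    by (auto simp: gp_edges_iff)
  from c show "y \<in> {V ((i+k) mod n), V ((i+(n-k)) mod n), U i}"
  proof (elim disjE)
    assume h: "{V i, y} = {V j, V ((j + k) mod n)}"
    then have "(i = j \<and> y = V ((j + k) mod n)) \<or> (i = (j + k) mod n \<and> y = V j)"
      by (auto simp: doubleton_eq_iff)
    then show ?thesis
    proof
      assume "i = (j + k) mod n \<and> y = V j"
      moreover have "((j + k) mod n + (n - k)) mod n = j" using shift_inv[of n k j] assms j by simp
      ultimately show ?thesis by simp
    qed auto
  qed (auto simp: doubleton_eq_iff)
next
  assume y: "y \<in> {V ((i+k) mod n), V ((i+(n-k)) mod n), U i}"
  have i1: "(i+k) mod n \<noteq> i" "(i+(n-k)) mod n \<noteq> i" using assms by (auto simp: mod2)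
  have inv: "((i + (n-k)) mod n + k) mod n = i" using shift_inv[of n "n-k" i] assms by simp
  have "(i + (n-k)) mod n < n" using assms by simp
  then have "{V ((i + (n-k)) mod n), V (((i + (n-k)) mod n + k) mod n)} \<in> gp_edges n k"
    unfolding gp_edges_iff by blast
  then have "{V i, V ((i + (n-k)) mod n)} \<in> gp_edges n k" using inv by (simp add: insert_commute)
  moreover have "{V i, V ((i+k) mod n)} \<in> gp_edges n k" "{U i, V i} \<in> gp_edges n k"
    unfolding gp_edges_iff using assms by blast+
  moreover have "{V i, U i} = {U i, V i}" by (rule insert_commute)
  ultimately have E: "{V i, V ((i + (n-k)) mod n)} \<in> gp_edges n k" "{V i, V ((i+k) mod n)} \<in> gp_edges n k"
      "{V i, U i} \<in> gp_edges n k" by simp_all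
  from y show "gp_adj n k (V i) y"
  proof (elim insertE)
    assume "y = V ((i + k) mod n)" then show ?thesis using E i1 by (simp add: gp_adj_def)
  next
    assume "y = V ((i + (n-k)) mod n)" then show ?thesis using E i1 by (simp add: gp_adj_def)
  next
    assume "y \<in> {}" then show ?thesis by simp
  qed (simp add: gp_adj_def E)
qed

lemma distU: assumes "(n::nat) \<ge> 3" "i < n" shows "(i+1) mod n \<noteq> (i+(n-1)) mod n"
proof -
  have a: "(i+1) mod n = (if i+1<n then i+1 else i+1-n)" using mod2[of "i+1" n] assms by linarith
  have b: "(i+(n-1)) mod n = (if i+(n-1)<n then i+(n-1) else i+(n-1)-n)" using mod2[of "i+(n-1)" n] assms by linarith
  show ?thesis by (simp only: a b split: if_split) (use assms in arith)
qed

lemma distV: assumes "i < (n::nat)" "0 < k" "k < n" "(2 * k) mod n \<noteq> 0" shows "(i+k) mod n \<noteq> (i+(n-k)) mod n"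
proof -
  have a: "(i+k) mod n = (if i+k<n then i+k else i+k-n)" using mod2[of "i+k" n] assms by linarith
  have b: "(i+(n-k)) mod n = (if i+(n-k)<n then i+(n-k) else i+(n-k)-n)" using mod2[of "i+(n-k)" n] assms by linarith
  have c: "2*k \<noteq> n" using assms by auto
  show ?thesis by (simp only: a b split: if_split) (use assms c in arith)
qed

lemma cnt: "finite A \<Longrightarrow> int (card {i\<in>A. P i}) = (\<Sum>i\<in>A. of_bool (P i))"
  by (simp add: Int_def Collect_conj_eq[symmetric] conj_commute)

lemma outer_iff: "x \<in> outer n \<longleftrightarrow> (\<exists>i<n. x = U i)" by (auto simp: outer_def)
lemma inner_iff: "x \<in> inner n \<longleftrightarrow> (\<exists>i<n. x = V i)" by (auto simp: inner_def)

lemma EU_eq: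
  "edges_in n k C \<inter> edges_in n k (outer n) =
     (\<lambda>i. {U i, U ((i+1) mod n)}) ` {i\<in>{0..<n}. U i \<in> C \<and> U ((i+1) mod n) \<in> C}"
proof (rule set_eqI, rule iffI)
  fix e assume "e \<in> edges_in n k C \<inter> edges_in n k (outer n)"
  then have e: "e \<in> gp_edges n k" "e \<subseteq> C" "e \<subseteq> outer n" unfolding edges_in_alt by auto
  from e(1) obtain j where j: "j < n" and
    c: "e = {U j, U ((j + 1) mod n)} \<or> e = {U j, V j} \<or> e = {V j, V ((j + k) mod n)}"
    unfolding gp_edges_iff by blast
  have "V j \<notin> outer n" by (simp add: outer_iff)
  then have nV: "V j \<notin> e" using e(3) by blast
  have "e \<noteq> {U j, V j}" "e \<noteq> {V j, V ((j + k) mod n)}" using nV by auto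
  then have ee: "e = {U j, U ((j + 1) mod n)}" using c by blast
  have "j \<in> {i\<in>{0..<n}. U i \<in> C \<and> U ((i+1) mod n) \<in> C}" using e(2) j unfolding ee by simp
  then show "e \<in> (\<lambda>i. {U i, U ((i+1) mod n)}) ` {i\<in>{0..<n}. U i \<in> C \<and> U ((i+1) mod n) \<in> C}"
    unfolding ee by (rule imageI)
next
  fix e assume "e \<in> (\<lambda>i. {U i, U ((i+1) mod n)}) ` {i\<in>{0..<n}. U i \<in> C \<and> U ((i+1) mod n) \<in> C}"
  then obtain i where i: "i < n" "U i \<in> C" "U ((i+1) mod n) \<in> C" and e: "e = {U i, U ((i+1) mod n)}" by auto
  have "e \<in> gp_edges n k" unfolding gp_edges_iff e using i by blast
  moreover have "e \<subseteq> outer n" using i e by (auto simp: outer_iff)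
  ultimately show "e \<in> edges_in n k C \<inter> edges_in n k (outer n)" unfolding edges_in_alt using i e by auto
qed

lemma EV_eq:
  "edges_in n k C \<inter> edges_in n k (inner n) =
     (\<lambda>i. {V i, V ((i+k) mod n)}) ` {i\<in>{0..<n}. V i \<in> C \<and> V ((i+k) mod n) \<in> C}"
proof (rule set_eqI, rule iffI)
  fix e assume "e \<in> edges_in n k C \<inter> edges_in n k (inner n)"
  then have e: "e \<in> gp_edges n k" "e \<subseteq> C" "e \<subseteq> inner n" unfolding edges_in_alt by auto
  from e(1) obtain j where j: "j < n" and
    c: "e = {U j, U ((j + 1) mod n)} \<or> e = {U j, V j} \<or> e = {V j, V ((j + k) mod n)}"
    unfolding gp_edges_iff by blast
  have "U j \<notin> inner n" by (simp add: inner_iff)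
  then have nU: "U j \<notin> e" using e(3) by blast
  have "e \<noteq> {U j, U ((j + 1) mod n)}" "e \<noteq> {U j, V j}" using nU by auto
  then have ee: "e = {V j, V ((j + k) mod n)}" using c by blast
  have "j \<in> {i\<in>{0..<n}. V i \<in> C \<and> V ((i+k) mod n) \<in> C}" using e(2) j unfolding ee by simp
  then show "e \<in> (\<lambda>i. {V i, V ((i+k) mod n)}) ` {i\<in>{0..<n}. V i \<in> C \<and> V ((i+k) mod n) \<in> C}"
    unfolding ee by (rule imageI)
next
  fix e assume "e \<in> (\<lambda>i. {V i, V ((i+k) mod n)}) ` {i\<in>{0..<n}. V i \<in> C \<and> V ((i+k) mod n) \<in> C}"
  then obtain i where i: "i < n" "V i \<in> C" "V ((i+k) mod n) \<in> C" and e: "e = {V i, V ((i+k) mod n)}" by auto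
  have "e \<in> gp_edges n k" unfolding gp_edges_iff e using i by blast
  moreover have "e \<subseteq> inner n" using i e by (auto simp: inner_iff)
  ultimately show "e \<in> edges_in n k C \<inter> edges_in n k (inner n)" unfolding edges_in_alt using i e by auto
qed

lemma ES_eq:
  "edges_in n k C \<inter> edges_between n k (outer n) (inner n) =
     (\<lambda>i. {U i, V i}) ` {i\<in>{0..<n}. U i \<in> C \<and> V i \<in> C}"
proof (rule set_eqI, rule iffI)
  fix e assume "e \<in> edges_in n k C \<inter> edges_between n k (outer n) (inner n)"
  then have e: "e \<in> gp_edges n k" "e \<subseteq> C" and xy: "\<exists>x y. e = {x, y} \<and> x \<in> outer n \<and> y \<in> inner n"
    unfolding edges_in_alt edges_between_def by auto
  from xy obtain x y where xy: "e = {x, y}" "x \<in> outer n" "y \<in> inner n" by blast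
  from e(1) obtain j where j: "j < n" and
    c: "e = {U j, U ((j + 1) mod n)} \<or> e = {U j, V j} \<or> e = {V j, V ((j + k) mod n)}"
    unfolding gp_edges_iff by blast
  have "e = {U j, V j}"
  proof -
    have "\<not> e = {U j, U ((j + 1) mod n)}"
    proof
      assume "e = {U j, U ((j + 1) mod n)}"
      then have "y = U j \<or> y = U ((j + 1) mod n)" using xy(1) by blast
      then show False using xy(3) by (auto simp: inner_iff)
    qed
    moreover have "\<not> e = {V j, V ((j + k) mod n)}"
    proof
      assume "e = {V j, V ((j + k) mod n)}"
      then have "x = V j \<or> x = V ((j + k) mod n)" using xy(1) by blast
      then show False using xy(2) by (auto simp: outer_iff)
    qed
    ultimately show ?thesis using c by blast
  qed
  then have ee: "e = {U j, V j}" .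
  have "j \<in> {i\<in>{0..<n}. U i \<in> C \<and> V i \<in> C}" using e(2) j unfolding ee by simp
  then show "e \<in> (\<lambda>i. {U i, V i}) ` {i\<in>{0..<n}. U i \<in> C \<and> V i \<in> C}"
    unfolding ee by (rule imageI)
next
  fix e assume "e \<in> (\<lambda>i. {U i, V i}) ` {i\<in>{0..<n}. U i \<in> C \<and> V i \<in> C}"
  then obtain i where i: "i < n" "U i \<in> C" "V i \<in> C" and e: "e = {U i, V i}" by auto
  have "e \<in> gp_edges n k" unfolding gp_edges_iff e using i by blast
  moreover have "U i \<in> outer n" "V i \<in> inner n" using i by (auto simp: outer_iff inner_iff)
  moreover have "e \<subseteq> C" using i e by simp
  moreover have "\<exists>x y. e = {x, y} \<and> x \<in> outer n \<and> y \<in> inner n" using e \<open>U i \<in> outer n\<close> \<open>V i \<in> inner n\<close> by blast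
  ultimately show "e \<in> edges_in n k C \<inter> edges_between n k (outer n) (inner n)"
    unfolding edges_in_alt edges_between_def by blast
qed

lemma fix_mod: assumes "i < (n::nat)" "(i + c) mod n = i" shows "c mod n = 0"
proof -
  have "(i + c) mod n = (i + 0) mod n" using assms by (metis add_0_right mod_less)
  then have "[i + c = i + 0] (mod n)" unfolding cong_def .
  then have "[c = 0] (mod n)" by (simp only: cong_add_lcancel_nat)
  then show ?thesis by (simp add: cong_def)
qed

lemma inj_shift_edge:
  assumes "(2 * c) mod n \<noteq> 0" and UV: "\<And>a b. F a = F b \<Longrightarrow> a = b"
  shows "inj_on (\<lambda>i. {F i, F ((i+c) mod n)}) {0..<(n::nat)}"
proof (rule inj_onI)
  fix i j assume i: "i \<in> {0..<n}" and j: "j \<in> {0..<n}" and h: "{F i, F ((i+c) mod n)} = {F j, F ((j+c) mod n)}"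
  show "i = j"
  proof (rule ccontr)
    assume "i \<noteq> j"
    have "(F i = F j \<and> F ((i+c) mod n) = F ((j+c) mod n)) \<or> (F i = F ((j+c) mod n) \<and> F ((i+c) mod n) = F j)"
      using h by (simp only: doubleton_eq_iff)
    then have "F i = F ((j+c) mod n) \<and> F ((i+c) mod n) = F j" using UV \<open>i \<noteq> j\<close> by blast
    then have "i = (j+c) mod n" "j = (i+c) mod n" using UV by blast+
    then have "((i + c) mod n + c) mod n = i" by simp
    then have "(i + 2 * c) mod n = i" by (simp add: mod_add_left_eq add.assoc mult_2)
    then have "(2 * c) mod n = 0" using fix_mod i by auto
    then show False using assms by simp
  qed
qed

lemma sum_aff: "(\<Sum>i\<in>{0..<n}. h i + (c::int) * (1 - h i)) = sum h {0..<n} + c * (int n - sum h {0..<n})"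
proof -
  have "(\<Sum>i\<in>{0..<n}. h i + c * (1 - h i)) = sum h {0..<n} + (\<Sum>i\<in>{0..<n}. c * (1 - h i))"
    by (rule sum.distrib)
  also have "(\<Sum>i\<in>{0..<n}. c * (1 - h i)) = c * (\<Sum>i\<in>{0..<n}. 1 - h i)"
    by (rule sum_distrib_left[symmetric])
  also have "(\<Sum>i\<in>{0..<n}. 1 - h i) = (\<Sum>i\<in>{0..<n}. 1) - sum h {0..<n}"
    by (rule sum_subtractf)
  also have "(\<Sum>i\<in>{0..<n}. (1::int)) = int n" by simp
  finally show ?thesis .
qed

theorem lemma4p1:
  fixes n k b :: nat and C :: "gpv set"
  assumes "n \<ge> 3" and "0 < k" and "k < n" and "(2 * k) mod n \<noteq> 0"
    and "b \<in> {1, 2, 3}"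
    and "regular_set n k 1 b C"
  shows "card (edges_in n k C \<inter> edges_in n k (outer n))
           = card (edges_in n k C \<inter> edges_in n k (inner n))
       \<and> real (2 * card (edges_in n k C \<inter> edges_in n k (outer n))
           + card (edges_in n k C \<inter> edges_between n k (outer n) (inner n)))
           = real b * real n / (2 + real b)"
proof -
  have n0: "0 < n" using assms by simp
  have two1: "(2 * 1) mod n \<noteq> 0" using assms by simp
  define f where "f i = (of_bool (U i \<in> C) :: int)" for i
  define g where "g i = (of_bool (V i \<in> C) :: int)" for i
  define A where "A = (\<Sum>i\<in>{0..<n}. f i)"
  define B where "B = (\<Sum>i\<in>{0..<n}. g i)"
  define eU where "eU = (\<Sum>i\<in>{0..<n}. f i * f ((i+1) mod n))"
  define eV where "eV = (\<Sum>i\<in>{0..<n}. g i * g ((i+k) mod n))"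
  define sp where "sp = (\<Sum>i\<in>{0..<n}. f i * g i)"
  have reg: "\<And>x. x \<in> C \<Longrightarrow> card {y \<in> C. gp_adj n k x y} = 1"
    "\<And>x. x \<in> gp_verts n \<Longrightarrow> x \<notin> C \<Longrightarrow> card {y \<in> C. gp_adj n k x y} = b"
    using assms(6) unfolding regular_set_def by auto
  have R1: "(if U i \<in> C then 1 else int b) = f ((i+1) mod n) + f ((i+(n-1)) mod n) + g i" if i: "i < n" for i
  proof -
    have S: "{y \<in> C. gp_adj n k (U i) y} = {U ((i+1) mod n), U ((i+(n-1)) mod n), V i} \<inter> C"
      using adjU[OF assms(1) i] by auto
    have d: "U ((i+1) mod n) \<noteq> U ((i+(n-1)) mod n)" using distU[OF assms(1) i] by simp
    have "int (card {y \<in> C. gp_adj n k (U i) y}) = f ((i+1) mod n) + f ((i+(n-1)) mod n) + g i"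
      unfolding S using card3[OF d, of "V i" C] by (simp add: f_def g_def)
    moreover have "U i \<in> gp_verts n" using i by (simp add: gp_verts_def)
    ultimately show ?thesis using reg by (cases "U i \<in> C") auto
  qed
  have R2: "(if V i \<in> C then 1 else int b) = g ((i+k) mod n) + g ((i+(n-k)) mod n) + f i" if i: "i < n" for i
  proof -
    have S: "{y \<in> C. gp_adj n k (V i) y} = {V ((i+k) mod n), V ((i+(n-k)) mod n), U i} \<inter> C"
      using adjV[OF assms(1) i assms(2,3)] by auto
    have d: "V ((i+k) mod n) \<noteq> V ((i+(n-k)) mod n)" using distV[OF i assms(2,3,4)] by simp
    have "int (card {y \<in> C. gp_adj n k (V i) y}) = g ((i+k) mod n) + g ((i+(n-k)) mod n) + f i"
      unfolding S using card3[OF d, of "U i" C] by (simp add: f_def g_def)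
    moreover have "V i \<in> gp_verts n" using i by (simp add: gp_verts_def)
    ultimately show ?thesis using reg by (cases "V i \<in> C") auto
  qed
  have sumf: "(\<Sum>i\<in>{0..<n}. f i + int b * (1 - f i)) = A + int b * (int n - A)"
    unfolding A_def by (rule sum_aff)
  have sumg: "(\<Sum>i\<in>{0..<n}. g i + int b * (1 - g i)) = B + int b * (int n - B)"
    unfolding B_def by (rule sum_aff)
  have E1: "A + int b * (int n - A) = 2 * A + B"
  proof -
    have "A + int b * (int n - A) = (\<Sum>i\<in>{0..<n}. f ((i+1) mod n) + f ((i+(n-1)) mod n) + g i)"
    proof -
      have "f i + int b * (1 - f i) = f ((i+1) mod n) + f ((i+(n-1)) mod n) + g i" if "i \<in> {0..<n}" for i
      proof -
        have "f i + int b * (1 - f i) = (if U i \<in> C then 1 else int b)" by (simp add: f_def)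
        also have "\<dots> = f ((i+1) mod n) + f ((i+(n-1)) mod n) + g i" using R1 that by simp
        finally show ?thesis .
      qed
      then show ?thesis unfolding sumf[symmetric] by (rule sum.cong[OF refl])
    qed
    also have "\<dots> = (\<Sum>i\<in>{0..<n}. f ((i+1) mod n)) + (\<Sum>i\<in>{0..<n}. f ((i+(n-1)) mod n)) + (\<Sum>i\<in>{0..<n}. g i)"
      by (simp only: sum.distrib)
    also have "\<dots> = A + A + B" unfolding A_def B_def shift_sum[OF n0, of f 1] shift_sum[OF n0, of f "n-1"] ..
    also have "\<dots> = 2 * A + B" by simp
    finally show ?thesis .
  qed
  have E2: "B + int b * (int n - B) = 2 * B + A"
  proof -
    have "B + int b * (int n - B) = (\<Sum>i\<in>{0..<n}. g ((i+k) mod n) + g ((i+(n-k)) mod n) + f i)"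
    proof -
      have "g i + int b * (1 - g i) = g ((i+k) mod n) + g ((i+(n-k)) mod n) + f i" if "i \<in> {0..<n}" for i
      proof -
        have "g i + int b * (1 - g i) = (if V i \<in> C then 1 else int b)" by (simp add: g_def)
        also have "\<dots> = g ((i+k) mod n) + g ((i+(n-k)) mod n) + f i" using R2 that by simp
        finally show ?thesis .
      qed
      then show ?thesis unfolding sumg[symmetric] by (rule sum.cong[OF refl])
    qed
    also have "\<dots> = (\<Sum>i\<in>{0..<n}. g ((i+k) mod n)) + (\<Sum>i\<in>{0..<n}. g ((i+(n-k)) mod n)) + (\<Sum>i\<in>{0..<n}. f i)"
      by (simp only: sum.distrib)
    also have "\<dots> = B + B + A" unfolding A_def B_def shift_sum[OF n0, of g k] shift_sum[OF n0, of g "n-k"] ..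
    also have "\<dots> = 2 * B + A" by simp
    finally show ?thesis .
  qed
  have "int b * (A - B) = 0" using E1 E2 by (simp add: algebra_simps)
  moreover have "int b \<noteq> 0" using assms(5) by auto
  ultimately have AB: "A = B" by simp
  have bn: "int b * int n = (2 + int b) * A" using E1 AB by (simp add: algebra_simps)
  have F1: "A = 2 * eU + sp"
  proof -
    have pt: "f i = f i * f ((i+1) mod n) + f i * f ((i+(n-1)) mod n) + f i * g i" if "i < n" for i
    proof -
      have "f i = f i * (if U i \<in> C then 1 else int b)" by (simp add: f_def)
      also have "\<dots> = f i * (f ((i+1) mod n) + f ((i+(n-1)) mod n) + g i)" using R1[OF that] by simp
      finally show ?thesis by (simp add: algebra_simps)
    qed
    have sh: "(\<Sum>i\<in>{0..<n}. f i * f ((i+(n-1)) mod n)) = eU"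
    proof -
      have "(\<Sum>i\<in>{0..<n}. f i * f ((i+(n-1)) mod n)) = (\<Sum>i\<in>{0..<n}. f ((i+1) mod n) * f (((i+1) mod n+(n-1)) mod n))"
        using shift_sum[OF n0, of "\<lambda>i. f i * f ((i+(n-1)) mod n)" 1] by simp
      also have "\<dots> = eU" unfolding eU_def
        by (rule sum.cong) (auto simp: shift_inv[of n 1, OF n0, simplified] mult.commute)
      finally show ?thesis .
    qed
    have "A = (\<Sum>i\<in>{0..<n}. f i * f ((i+1) mod n) + f i * f ((i+(n-1)) mod n) + f i * g i)"
      unfolding A_def by (rule sum.cong[OF refl]) (rule pt, simp)
    also have "\<dots> = eU + eU + sp" unfolding sum.distrib sh unfolding eU_def sp_def ..
    also have "\<dots> = 2 * eU + sp" by simp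
    finally show ?thesis .
  qed
  have F2: "B = 2 * eV + sp"
  proof -
    have pt: "g i = g i * g ((i+k) mod n) + g i * g ((i+(n-k)) mod n) + g i * f i" if "i < n" for i
    proof -
      have "g i = g i * (if V i \<in> C then 1 else int b)" by (simp add: g_def)
      also have "\<dots> = g i * (g ((i+k) mod n) + g ((i+(n-k)) mod n) + f i)" using R2[OF that] by simp
      finally show ?thesis by (simp add: algebra_simps)
    qed
    have sh: "(\<Sum>i\<in>{0..<n}. g i * g ((i+(n-k)) mod n)) = eV"
    proof -
      have "(\<Sum>i\<in>{0..<n}. g i * g ((i+(n-k)) mod n)) = (\<Sum>i\<in>{0..<n}. g ((i+k) mod n) * g (((i+k) mod n+(n-k)) mod n))"
        using shift_sum[OF n0, of "\<lambda>i. g i * g ((i+(n-k)) mod n)" k] by (simp only:)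
      also have "\<dots> = eV" unfolding eV_def
      proof (rule sum.cong[OF refl])
        fix i assume "i \<in> {0..<n}"
        then have "((i+k) mod n+(n-k)) mod n = i" using shift_inv[OF n0 less_imp_le[OF assms(3)]] by simp
        then show "g ((i+k) mod n) * g (((i+k) mod n+(n-k)) mod n) = g i * g ((i+k) mod n)"
          by (simp only: mult.commute)
      qed
      finally show ?thesis .
    qed
    have "B = (\<Sum>i\<in>{0..<n}. g i * g ((i+k) mod n) + g i * g ((i+(n-k)) mod n) + g i * f i)"
      unfolding B_def by (rule sum.cong[OF refl]) (rule pt, simp)
    also have "\<dots> = eV + eV + sp" unfolding sum.distrib sh unfolding eV_def sp_def by (simp add: mult.commute)
    also have "\<dots> = 2 * eV + sp" by simp
    finally show ?thesis .
  qed
  have cU: "int (card (edges_in n k C \<inter> edges_in n k (outer n))) = eU"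
  proof -
    have inj: "inj_on (\<lambda>i. {U i, U ((i+1) mod n)}) {0..<n}"
      by (rule inj_shift_edge[OF two1]) simp
    have sub: "{i\<in>{0..<n}. U i \<in> C \<and> U ((i+1) mod n) \<in> C} \<subseteq> {0..<n}" by (rule Collect_subset)
    have c1: "card (edges_in n k C \<inter> edges_in n k (outer n)) = card {i\<in>{0..<n}. U i \<in> C \<and> U ((i+1) mod n) \<in> C}"
      unfolding EU_eq by (rule card_image[OF inj_on_subset[OF inj sub]])
    have "int (card {i\<in>{0..<n}. U i \<in> C \<and> U ((i+1) mod n) \<in> C}) = (\<Sum>i\<in>{0..<n}. of_bool (U i \<in> C \<and> U ((i+1) mod n) \<in> C))"
      by (rule cnt) simp
    then show ?thesis unfolding c1 eU_def f_def of_bool_conj .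
  qed
  have cV: "int (card (edges_in n k C \<inter> edges_in n k (inner n))) = eV"
  proof -
    have inj: "inj_on (\<lambda>i. {V i, V ((i+k) mod n)}) {0..<n}"
      by (rule inj_shift_edge[OF assms(4)]) simp
    have sub: "{i\<in>{0..<n}. V i \<in> C \<and> V ((i+k) mod n) \<in> C} \<subseteq> {0..<n}" by (rule Collect_subset)
    have c1: "card (edges_in n k C \<inter> edges_in n k (inner n)) = card {i\<in>{0..<n}. V i \<in> C \<and> V ((i+k) mod n) \<in> C}"
      unfolding EV_eq by (rule card_image[OF inj_on_subset[OF inj sub]])
    have "int (card {i\<in>{0..<n}. V i \<in> C \<and> V ((i+k) mod n) \<in> C}) = (\<Sum>i\<in>{0..<n}. of_bool (V i \<in> C \<and> V ((i+k) mod n) \<in> C))"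
      by (rule cnt) simp
    then show ?thesis unfolding c1 eV_def g_def of_bool_conj .
  qed
  have cS: "int (card (edges_in n k C \<inter> edges_between n k (outer n) (inner n))) = sp"
  proof -
    have inj: "inj_on (\<lambda>i. {U i, V i}) {0..<n}"
      by (rule inj_onI) (simp add: doubleton_eq_iff)
    have sub: "{i\<in>{0..<n}. U i \<in> C \<and> V i \<in> C} \<subseteq> {0..<n}" by (rule Collect_subset)
    have c1: "card (edges_in n k C \<inter> edges_between n k (outer n) (inner n)) = card {i\<in>{0..<n}. U i \<in> C \<and> V i \<in> C}"
      unfolding ES_eq by (rule card_image[OF inj_on_subset[OF inj sub]])
    have "int (card {i\<in>{0..<n}. U i \<in> C \<and> V i \<in> C}) = (\<Sum>i\<in>{0..<n}. of_bool (U i \<in> C \<and> V i \<in> C))"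
      by (rule cnt) simp
    then show ?thesis unfolding c1 sp_def f_def g_def of_bool_conj .
  qed
  have eq1: "eU = eV" using F1 F2 AB by linarith
  define X where "X = card (edges_in n k C \<inter> edges_in n k (outer n))"
  define Y where "Y = card (edges_in n k C \<inter> edges_between n k (outer n) (inner n))"
  have AXY: "A = 2 * int X + int Y" using F1 cU cS unfolding X_def Y_def by linarith
  from bn have "int b * int n = (2 + int b) * (2 * int X + int Y)" by (simp only: AXY)
  then have "int (b * n) = int ((2 + b) * (2 * X + Y))" by (simp only: of_nat_mult of_nat_add of_nat_numeral)
  then have nat_eq: "b * n = (2 + b) * (2 * X + Y)" by (simp only: of_nat_eq_iff)
  have "real (b * n) = real ((2 + b) * (2 * X + Y))" using nat_eq by (simp only:)
  then have h: "real b * real n = (2 + real b) * real (2 * X + Y)" by (simp only: of_nat_mult of_nat_add of_nat_numeral)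
  have pos: "2 + real b \<noteq> 0" by linarith
  have r: "real (2 * X + Y) = real b * real n / (2 + real b)"
    unfolding h using pos by (rule nonzero_mult_div_cancel_left[symmetric])
  have "int X = int (card (edges_in n k C \<inter> edges_in n k (inner n)))" using cU cV eq1 X_def by linarith
  then have xe: "X = card (edges_in n k C \<inter> edges_in n k (inner n))" by (simp only: of_nat_eq_iff)
  show ?thesis unfolding X_def[symmetric] Y_def[symmetric] using xe r by (rule conjI)
qed

end
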